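(* Let $f\colon S^1\to S^1$ be a self-transverse smooth map, let $J$ be an arc in the range whose endpoints $x,y$ are regular values of $f$, and suppose that $J_+$ is a positive arc and $J_-$ a negative arc in $f^{-1}(J)$. Then there exists an embedded path $p\colon(I,\partial I)\to(S^1,f^{-1}(x))$ which either starts with $J_+$ and ends with some negative arc $J'_-$ of $f^{-1}(J)$, or starts with $J_-$ and ends with some positive arc $J'_+$ of $f^{-1}(J)$, such that $f\circ p\colon(I,\partial I)\to(S^1,\{x\})$ factors through $(\mathbb{R},\{0\})$ (i.e. lifts to the universal cover $\mathbb{R}\to S^1$ with both endpoints going to $0$).
   Context: Orient both circles. For an arc $J$ in the range transverse to $f$, an orientation of $J$ induces an orientation of $f^{-1}(J)$ via the co-orientation. A component $C$ of $f^{-1}(J)$ is a positive (resp. negative) arc if $f|_C\colon(C,\partial C)\to(J,\partial J)$ has degree $+1$ (resp. $-1$). "Starts with $J_+$" means $J_+$ is an initial subarc of the path $p$ (beginning at its endpoint in $f^{-1}(x)$), and "ends with $J'_-$" means $J'_-$ is a terminal subarc of $p$. *)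

theory Defs
  imports "HOL-Analysis.Analysis"
begin

text \<open>The circle S^1 is the unit circle in the complex plane, parametrised by cis.\<close>

abbreviation S1 :: "complex set" where "S1 \<equiv> sphere 0 1"

definition smooth_real_fun :: "(real \<Rightarrow> complex) \<Rightarrow> bool" where
  "smooth_real_fun g \<longleftrightarrow> (\<exists>D :: nat \<Rightarrow> real \<Rightarrow> complex. D 0 = g \<and>
      (\<forall>n t. (D n has_vector_derivative D (Suc n) t) (at t)))"

definition smooth_circle_map :: "(complex \<Rightarrow> complex) \<Rightarrow> bool" where
  "smooth_circle_map f \<longleftrightarrow> f ` S1 \<subseteq> S1 \<and> smooth_real_fun (\<lambda>t. f (cis t))"

definition cdiff :: "(complex \<Rightarrow> complex) \<Rightarrow> real \<Rightarrow> complex" where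
  "cdiff f t = vector_derivative (\<lambda>s. f (cis s)) (at t)"

definition regular_value :: "(complex \<Rightarrow> complex) \<Rightarrow> complex \<Rightarrow> bool" where
  "regular_value f x \<longleftrightarrow> (\<forall>t. f (cis t) = x \<longrightarrow> cdiff f t \<noteq> 0)"

text \<open>Self-transversality: f x f is transverse to the diagonal away from the diagonal,
  i.e. at a double point f(p) = f(q), p \<noteq> q, the differentials at p and q span the tangent
  space, i.e. not both vanish.\<close>
definition self_transverse :: "(complex \<Rightarrow> complex) \<Rightarrow> bool" where
  "self_transverse f \<longleftrightarrow> (\<forall>s t. cis s \<noteq> cis t \<and> f (cis s) = f (cis t) \<longrightarrow>
      cdiff f s \<noteq> 0 \<or> cdiff f t \<noteq> 0)"

text \<open>Positive / negative arcs of f^{-1}(J), where J = cis ` {a..b} (a < b < a + 2 pi) is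
  oriented counterclockwise from cis a to cis b, and the component C = cis ` {c..d}
  carries the counterclockwise orientation of S1. The degree of
  f|C : (C, boundary C) \<rightarrow> (J, boundary J) is +1 iff the initial point of C goes to the initial
  point of J and the terminal point to the terminal point, -1 iff they are swapped.\<close>
definition positive_arc :: "(complex \<Rightarrow> complex) \<Rightarrow> real \<Rightarrow> real \<Rightarrow> complex set \<Rightarrow> bool" where
  "positive_arc f a b C \<longleftrightarrow> C \<in> components (S1 \<inter> f -` (cis ` {a..b})) \<and>
     (\<exists>c d. c < d \<and> d < c + 2 * pi \<and> C = cis ` {c..d} \<and>
            f (cis c) = cis a \<and> f (cis d) = cis b)"

definition negative_arc :: "(complex \<Rightarrow> complex) \<Rightarrow> real \<Rightarrow> real \<Rightarrow> complex set \<Rightarrow> bool" where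
  "negative_arc f a b C \<longleftrightarrow> C \<in> components (S1 \<inter> f -` (cis ` {a..b})) \<and>
     (\<exists>c d. c < d \<and> d < c + 2 * pi \<and> C = cis ` {c..d} \<and>
            f (cis c) = cis b \<and> f (cis d) = cis a)"

definition starts_with :: "(real \<Rightarrow> complex) \<Rightarrow> complex set \<Rightarrow> bool" where
  "starts_with p A \<longleftrightarrow> (\<exists>s. 0 < s \<and> s \<le> 1 \<and> p ` {0..s} = A)"

definition ends_with :: "(real \<Rightarrow> complex) \<Rightarrow> complex set \<Rightarrow> bool" where
  "ends_with p A \<longleftrightarrow> (\<exists>s. 0 \<le> s \<and> s < 1 \<and> p ` {s..1} = A)"

end

theory Submission
  imports Defs
begin


lemma core:
  fixes K :: "real \<Rightarrow> real" and L e :: real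
  assumes contK: "continuous_on UNIV K"
   and L: "0 < L" "L < 2*pi" and e: "0 < e" "e < 2*pi"
   and K0: "K 0 = 0" and Ke: "K e = L" and band: "\<forall>s\<in>{0..e}. 0 \<le> K s \<and> K s \<le> L"
   and per: "\<forall>s. K (s + 2*pi) = K s + K (2*pi)" and neg: "K (2*pi) \<le> 0"
   and der: "\<forall>s. K s = 0 \<or> K s = L \<longrightarrow> (\<exists>D. D \<noteq> 0 \<and> (K has_real_derivative D) (at s))"
  shows "\<exists>t1 t2 \<delta>. e < t1 \<and> t1 < t2 \<and> t2 < 2*pi \<and> K t1 = L \<and> K t2 = 0 \<and>
     (\<forall>s\<in>{t1..t2}. 0 \<le> K s \<and> K s \<le> L) \<and> 0 < \<delta> \<and> t2 - t1 + 2*\<delta> < 2*pi \<and>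
     (\<forall>s. t1 - \<delta> < s \<and> s < t1 \<longrightarrow> L < K s \<and> K s < 2*pi) \<and>
     (\<forall>s. t2 < s \<and> s < t2 + \<delta> \<longrightarrow> L - 2*pi < K s \<and> K s < 0)"
proof -
  have contI: "continuous_on I K" for I using contK continuous_on_subset by blast
  define S1 where "S1 = {e..2*pi} \<inter> {t. L \<le> K t}"
  have "closed {t. L \<le> K t}" by (rule closed_Collect_le) (auto intro: contK)
  then have "compact S1" unfolding S1_def by (simp add: compact_Int_closed)
  moreover have "e \<in> S1" using Ke e unfolding S1_def by auto
  ultimately obtain t1 where t1: "t1 \<in> S1" "\<forall>y\<in>S1. y \<le> t1"
    using compact_attains_sup by blast
  have t1e: "e \<le> t1" "t1 \<le> 2*pi" "L \<le> K t1" using t1 unfolding S1_def by auto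
  have after1: "K s < L" if "t1 < s" "s \<le> 2*pi" for s
  proof (rule ccontr)
    assume "\<not> K s < L" then have "s \<in> S1" using that t1e unfolding S1_def by auto
    then show False using t1(2) that by force
  qed
  have Kt1: "K t1 = L"
  proof (rule ccontr)
    assume "K t1 \<noteq> L"
    then have "K (2*pi) \<le> L" "L \<le> K t1" using t1e neg L by auto
    then obtain s where "t1 \<le> s" "s \<le> 2*pi" "K s = L" using IVT2'[of K "2*pi" L t1] t1e contI by blast
    then show False using after1[of s] \<open>K t1 \<noteq> L\<close> by (cases "s = t1") auto
  qed
  have t1lt: "t1 < 2*pi" using t1e Kt1 neg L by (metis antisym_conv1 not_le)
  obtain D1 where D1: "D1 \<noteq> 0" "(K has_real_derivative D1) (at t1)" using der Kt1 by blast
  have "D1 < 0"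
  proof (rule ccontr)
    assume "\<not> D1 < 0" then have "0 < D1" using D1 by auto
    then obtain d where d: "d > 0" "\<forall>h>0. h < d \<longrightarrow> K t1 < K (t1 + h)" using DERIV_pos_inc_right D1 by blast
    define h where "h = min (d/2) (2*pi - t1)"
    have "h > 0" "h < d" "t1 + h \<le> 2*pi" using d t1lt unfolding h_def by auto
    then show False using d after1[of "t1+h"] Kt1 by fastforce
  qed
  then obtain d1 where d1: "d1 > 0" "\<forall>h>0. h < d1 \<longrightarrow> K t1 < K (t1 - h)" using DERIV_neg_dec_left D1 by blast
  have t1gt: "e < t1"
  proof (rule ccontr)
    assume "\<not> e < t1" then have "t1 = e" using t1e by auto
    define h where "h = min (d1/2) e"
    have "h > 0" "h < d1" "t1 - h \<in> {0..e}" using d1 e \<open>t1 = e\<close> unfolding h_def by auto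
    then show False using d1 band Kt1 by fastforce
  qed
  define S2 where "S2 = {t1..2*pi} \<inter> {t. K t \<le> 0}"
  have "closed {t. K t \<le> 0}" by (rule closed_Collect_le) (auto intro: contK)
  then have "compact S2" unfolding S2_def by (simp add: compact_Int_closed)
  moreover have "2*pi \<in> S2" using neg t1lt unfolding S2_def by auto
  ultimately obtain t2 where t2: "t2 \<in> S2" "\<forall>y\<in>S2. t2 \<le> y"
    using compact_attains_inf by blast
  have t2e: "t1 \<le> t2" "t2 \<le> 2*pi" "K t2 \<le> 0" using t2 unfolding S2_def by auto
  have before2: "0 < K s" if "t1 \<le> s" "s < t2" for s
  proof (rule ccontr)
    assume "\<not> 0 < K s" then have "s \<in> S2" using that t2e unfolding S2_def by auto
    then show False using t2(2) that by force
  qed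
  have Kt2: "K t2 = 0"
  proof (rule ccontr)
    assume "K t2 \<noteq> 0"
    then have "K t2 \<le> 0" "0 \<le> K t1" using t2e Kt1 L by auto
    then obtain s where "t1 \<le> s" "s \<le> t2" "K s = 0" using IVT2'[of K t2 0 t1] t2e contI by blast
    then show False using before2[of s] \<open>K t2 \<noteq> 0\<close> by (cases "s = t2") auto
  qed
  have t12: "t1 < t2" using t2e Kt1 Kt2 L by (metis order_le_less less_irrefl)
  obtain D2 where D2: "D2 \<noteq> 0" "(K has_real_derivative D2) (at t2)" using der Kt2 by blast
  have "D2 < 0"
  proof (rule ccontr)
    assume "\<not> D2 < 0" then have "0 < D2" using D2 by auto
    then obtain d where d: "d > 0" "\<forall>h>0. h < d \<longrightarrow> K (t2 - h) < K t2" using DERIV_pos_inc_left D2 by blast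
    define h where "h = min (d/2) (t2 - t1)"
    have "h > 0" "h < d" "t1 \<le> t2 - h" using d t12 unfolding h_def by auto
    then show False using d before2[of "t2-h"] Kt2 by fastforce
  qed
  then obtain d2 where d2: "d2 > 0" "\<forall>h>0. h < d2 \<longrightarrow> K (t2 + h) < K t2" using DERIV_neg_dec_right D2 by blast
  have t2lt: "t2 < 2*pi"
  proof (rule ccontr)
    assume "\<not> t2 < 2*pi" then have "t2 = 2*pi" using t2e by auto
    define h where "h = min (d2/2) e"
    have "h > 0" "h < d2" "h \<in> {0..e}" using d2 e unfolding h_def by auto
    moreover have "K (h + 2*pi) = K h" using per Kt2 \<open>t2 = 2*pi\<close> by simp
    ultimately show False using d2 band Kt2 \<open>t2 = 2*pi\<close> by (fastforce simp: add.commute)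
  qed
  obtain r1 where r1: "r1 > 0" "\<forall>s. dist s t1 < r1 \<longrightarrow> dist (K s) (K t1) < 2*pi - L"
    using contK L unfolding continuous_on_iff by (metis UNIV_I diff_gt_0_iff_gt)
  obtain r2 where r2: "r2 > 0" "\<forall>s. dist s t2 < r2 \<longrightarrow> dist (K s) (K t2) < 2*pi - L"
    using contK L unfolding continuous_on_iff by (metis UNIV_I diff_gt_0_iff_gt)
  define \<delta> where "\<delta> = min (min d1 d2) (min (min r1 r2) ((2*pi - (t2 - t1))/3))"
  have \<delta>: "\<delta> \<le> d1" "\<delta> \<le> d2" "\<delta> \<le> r1" "\<delta> \<le> r2" "\<delta> \<le> (2*pi - (t2 - t1))/3"
    unfolding \<delta>_def by linarith+
  have "0 < (2*pi - (t2 - t1))/3" using t1gt t2lt e by simp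
  then have "0 < \<delta>" unfolding \<delta>_def using d1 d2 r1 r2 by simp
  show ?thesis
  proof (intro exI conjI)
    show "\<forall>s\<in>{t1..t2}. 0 \<le> K s \<and> K s \<le> L"
    proof
      fix s assume s: "s \<in> {t1..t2}"
      show "0 \<le> K s \<and> K s \<le> L"
        using before2[of s] after1[of s] Kt1 Kt2 s t2lt L by (cases "s = t2"; cases "s = t1") auto
    qed
    show "\<forall>s. t1 - \<delta> < s \<and> s < t1 \<longrightarrow> L < K s \<and> K s < 2*pi"
    proof (intro allI impI)
      fix s assume s: "t1 - \<delta> < s \<and> s < t1"
      have "K t1 < K s" using d1(2)[rule_format, of "t1 - s"] s \<delta> by simp
      moreover have "dist (K s) (K t1) < 2*pi - L" using r1 s \<delta> by (auto simp: dist_real_def)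
      ultimately show "L < K s \<and> K s < 2*pi" using Kt1 by (auto simp: dist_real_def)
    qed
    show "\<forall>s. t2 < s \<and> s < t2 + \<delta> \<longrightarrow> L - 2*pi < K s \<and> K s < 0"
    proof (intro allI impI)
      fix s assume s: "t2 < s \<and> s < t2 + \<delta>"
      have "K s < K t2" using d2(2)[rule_format, of "s - t2"] s \<delta> by simp
      moreover have "dist (K s) (K t2) < 2*pi - L" using r2 s \<delta> by (auto simp: dist_real_def)
      ultimately show "L - 2*pi < K s \<and> K s < 0" using Kt2 by (auto simp: dist_real_def)
    qed
  qed (use t1gt t12 t2lt Kt1 Kt2 \<delta> \<open>0 < \<delta>\<close> in auto)
qed



lemma cis_eq_int: "cis u = cis v \<longleftrightarrow> (\<exists>k::int. u = v + 2*pi*k)"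
proof -
  have "cis u = cis v \<longleftrightarrow> sin u = sin v \<and> cos u = cos v" by (auto simp: complex_eq_iff)
  then show ?thesis using sin_cos_eq_iff[of u v] by auto
qed

lemma cis_shift_int: "cis (u + 2*pi* of_int k) = cis u"
  using cis_eq_int by blast

lemma cis_normalize:
  assumes "norm z = 1"
  shows "\<exists>t. cis t = z \<and> a \<le> t \<and> t < a + 2*pi"
proof -
  have "z \<noteq> 0" using assms by auto
  then have z: "z = cis (Arg z)" using assms cis_Arg[of z] by (auto simp: sgn_div_norm)
  define n where "n = floor ((Arg z - a)/(2*pi))"
  have "of_int n \<le> (Arg z - a)/(2*pi)" "(Arg z - a)/(2*pi) < of_int n + 1" unfolding n_def by linarith+
  then have 1: "2*pi* of_int n \<le> Arg z - a" "Arg z - a < 2*pi* of_int n + 2*pi"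
    by (simp_all add: field_simps)
  have "cis (Arg z + 2*pi* of_int (-n)) = z" using z cis_shift_int by metis
  then show ?thesis using 1 by (intro exI[of _ "Arg z + 2*pi* of_int (-n)"]) auto
qed

lemma vd_Im:
  assumes "(g has_vector_derivative g') (at t)"
  shows "((\<lambda>s. Im (g s)) has_real_derivative Im g') (at t)"
proof -
  have "((\<lambda>s. Im (g s)) has_derivative (\<lambda>h. Im (h *\<^sub>R g'))) (at t)"
    using bounded_linear.has_derivative[OF bounded_linear_Im] assms
    unfolding has_vector_derivative_def by blast
  moreover have "(\<lambda>h. Im (h *\<^sub>R g')) = (*) (Im g')" by (auto simp: fun_eq_iff)
  ultimately show ?thesis unfolding has_field_derivative_def by simp
qed

lemma arc_component:
  fixes P :: "complex set" and Q :: "real \<Rightarrow> bool"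
  assumes PQ: "\<forall>t. cis t \<in> P \<longleftrightarrow> Q t" and PS: "P \<subseteq> sphere 0 1"
    and ab: "\<alpha> < \<beta>" and d: "0 < \<delta>" "\<beta> - \<alpha> + 2*\<delta> < 2*pi"
    and inside: "\<forall>t\<in>{\<alpha>..\<beta>}. Q t"
    and left: "\<forall>t. \<alpha> - \<delta> < t \<and> t < \<alpha> \<longrightarrow> \<not> Q t"
    and right: "\<forall>t. \<beta> < t \<and> t < \<beta> + \<delta> \<longrightarrow> \<not> Q t"
  shows "cis ` {\<alpha>..\<beta>} \<in> components P"
proof -
  define C where "C = cis ` {\<alpha>..\<beta>}"
  define B where "B = cis ` {\<beta> + \<delta>/2 .. \<alpha> - \<delta>/2 + 2*pi}"
  have contcis: "continuous_on A cis" for A by (intro continuous_intros)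
  have "compact C" unfolding C_def by (intro compact_continuous_image contcis) auto
  then have clC: "closed C" by (rule compact_imp_closed)
  have "compact B" unfolding B_def by (intro compact_continuous_image contcis) auto
  then have clB: "closed B" by (rule compact_imp_closed)
  have conC: "connected C" unfolding C_def by (intro connected_continuous_image contcis) auto
  have CP: "C \<subseteq> P" unfolding C_def using PQ inside by auto
  have Cne: "C \<noteq> {}" unfolding C_def using ab by auto
  have CB: "C \<inter> B = {}"
  proof (rule ccontr)
    assume "C \<inter> B \<noteq> {}"
    then obtain t u where t: "t \<in> {\<alpha>..\<beta>}" and u: "u \<in> {\<beta> + \<delta>/2 .. \<alpha> - \<delta>/2 + 2*pi}" and "cis t = cis u"
      unfolding C_def B_def by blast
    then obtain k :: int where k: "u = t + 2*pi*k" using cis_eq_int by metis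
    have "0 < 2*pi*k" using k t u d by auto
    have "2*pi*k < 2*pi*1" using k t u d unfolding atLeastAtMost_iff by linarith
    have "0 < k" using \<open>0 < 2*pi*k\<close> by (simp add: zero_less_mult_iff)
    have "real_of_int k < 1" using \<open>2*pi*k < 2*pi*1\<close> mult_less_cancel_left_pos[of "2*pi" "real_of_int k" 1] by simp
    then have "k < 1" by simp
    then show False using \<open>0 < k\<close> by simp
  qed
  have PB: "P - B \<subseteq> C"
  proof
    fix z assume z: "z \<in> P - B"
    then have "norm z = 1" using PS by auto
    then obtain t where t: "cis t = z" "\<alpha> - \<delta>/2 \<le> t" "t < \<alpha> - \<delta>/2 + 2*pi"
      using cis_normalize by blast
    have "Q t" using PQ t z by auto
    have "t < \<beta> + \<delta>/2" 
    proof (rule ccontr)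
      assume "\<not> t < \<beta> + \<delta>/2"
      then have "t \<in> {\<beta> + \<delta>/2 .. \<alpha> - \<delta>/2 + 2*pi}" using t by auto
      then have "z \<in> B" using t unfolding B_def by blast
      then show False using z by blast
    qed
    have "\<alpha> \<le> t"
    proof (rule ccontr)
      assume "\<not> \<alpha> \<le> t" then have "\<alpha> - \<delta> < t \<and> t < \<alpha>" using t d by auto
      then show False using left \<open>Q t\<close> by blast
    qed
    moreover have "t \<le> \<beta>"
    proof (rule ccontr)
      assume "\<not> t \<le> \<beta>" then have "\<beta> < t \<and> t < \<beta> + \<delta>" using \<open>t < \<beta> + \<delta>/2\<close> d by auto
      then show False using right \<open>Q t\<close> by blast
    qed
    ultimately have "t \<in> {\<alpha>..\<beta>}" by auto
    then show "z \<in> C" using t unfolding C_def by auto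
  qed
  have "\<forall>D. D \<noteq> {} \<and> C \<subseteq> D \<and> D \<subseteq> P \<and> connected D \<longrightarrow> D = C"
  proof (intro allI impI)
    fix D assume D: "D \<noteq> {} \<and> C \<subseteq> D \<and> D \<subseteq> P \<and> connected D"
    have eq: "D \<inter> C = D \<inter> (- B)" using D CB PB by blast
    have "openin (top_of_set D) (D \<inter> (- B))" using clB by (intro openin_open_Int) auto
    moreover have "closedin (top_of_set D) (D \<inter> C)" using clC by (intro closedin_closed_Int)
    ultimately have "D \<inter> C = {} \<or> D \<inter> C = D" using D eq unfolding connected_clopen by metis
    then show "D = C" using D Cne by blast
  qed
  then show ?thesis unfolding C_def[symmetric] in_components_maximal using Cne CP conC by blast
qed



lemma lift_exists:
  fixes F :: "real \<Rightarrow> complex"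
  assumes contF: "continuous_on UNIV F" and nF: "\<forall>t. norm (F t) = 1"
  obtains G where "continuous_on UNIV G" "\<forall>t. F t = cis (G t)"
proof -
  have "F z \<noteq> 0" for z using nF by (metis norm_zero zero_neq_one)
  then obtain g where g: "continuous_on UNIV g" "\<And>x. x \<in> UNIV \<Longrightarrow> F x = exp (g x)"
    using continuous_logarithm_on_contractible[of UNIV F] contF by auto
  have "F t = cis (Im (g t))" for t
  proof -
    have "exp (Re (g t)) = 1" using nF g(2)[of t] by (metis UNIV_I norm_exp_eq_Re)
    then have "Re (g t) = 0" by simp
    then show ?thesis using g(2)[of t] exp_eq_polar[of "g t"] by simp
  qed
  moreover have "continuous_on UNIV (\<lambda>t. Im (g t))" using g(1) by (intro continuous_intros)
  ultimately show ?thesis using that by blast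
qed

lemma lift_period:
  fixes F :: "real \<Rightarrow> complex"
  assumes contG: "continuous_on UNIV G" and FG: "\<forall>t. F t = cis (G t)"
    and per: "\<forall>t. F (t + 2*pi) = F t"
  shows "\<exists>N::int. \<forall>t. G (t + 2*pi) = G t + 2*pi*N"
proof -
  define h where "h t = G (t + 2*pi) - G t" for t
  have hk: "\<exists>k::int. h t = 2*pi*k" for t
  proof -
    have "cis (G (t + 2*pi)) = cis (G t)" using FG per by metis
    then obtain k :: int where "G (t + 2*pi) = G t + 2*pi*k" using cis_eq_int by metis
    then show ?thesis unfolding h_def by auto
  qed
  have conth: "continuous_on UNIV h" unfolding h_def
    by (intro continuous_intros continuous_on_compose2[OF contG]) auto
  have "h constant_on UNIV"
  proof (rule continuous_discrete_range_constant[OF connected_UNIV conth])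
    fix x :: real assume "x \<in> UNIV"
    show "\<exists>e>0. \<forall>y. y \<in> UNIV \<and> h y \<noteq> h x \<longrightarrow> e \<le> norm (h y - h x)"
    proof (intro exI[of _ "2*pi"] conjI allI impI)
      fix y assume y: "y \<in> UNIV \<and> h y \<noteq> h x"
      obtain k1 :: int where k1: "h y = 2*pi*k1" using hk by blast
      obtain k2 :: int where k2: "h x = 2*pi*k2" using hk by blast
      have "k1 \<noteq> k2" using y k1 k2 by auto
      then have "1 \<le> \<bar>k1 - k2\<bar>" by linarith
      then have "1 \<le> \<bar>real_of_int k1 - real_of_int k2\<bar>" by (metis of_int_abs of_int_diff of_int_1_le_iff)
      then have "2*pi*1 \<le> 2*pi*\<bar>real_of_int k1 - real_of_int k2\<bar>" by (intro mult_left_mono) auto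
      also have "\<dots> = norm (h y - h x)" using k1 k2 by (simp add: abs_mult right_diff_distrib[symmetric])
      finally show "2*pi \<le> norm (h y - h x)" by simp
    qed simp
  qed
  then obtain c where c: "\<forall>t. h t = c" unfolding constant_on_def by blast
  obtain N :: int where "h 0 = 2*pi*N" using hk by blast
  then show ?thesis using c unfolding h_def by (intro exI[of _ N]) (metis add_diff_cancel_left' diff_add_cancel)
qed

lemma lift_deriv:
  fixes F :: "real \<Rightarrow> complex" and G :: "real \<Rightarrow> real"
  assumes contG: "continuous_on UNIV G" and FG: "\<forall>s. F s = cis (G s)"
    and dF: "(F has_vector_derivative F') (at t)" and nz: "F' \<noteq> 0"
  shows "\<exists>D. D \<noteq> 0 \<and> (G has_real_derivative D) (at t)"
proof -
  define w where "w = F t"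
  have w: "w = cis (G t)" "w \<noteq> 0" "norm w = 1" using FG unfolding w_def by auto
  define k where "k s = G t + Im (Ln (F s / w))" for s
  have "continuous (at t) F" using dF by (rule has_vector_derivative_continuous)
  then have "continuous (at t) (\<lambda>s. F s / w)" by (intro continuous_intros) (use w in auto)
  then obtain r1 where r1: "r1 > 0" "\<forall>s. dist s t < r1 \<longrightarrow> dist (F s / w) (F t / w) < 1"
    unfolding continuous_at_eps_delta by (meson zero_less_one)
  have "continuous (at t) G" using contG by (simp add: continuous_on_eq_continuous_at)
  then obtain r2 where r2: "r2 > 0" "\<forall>s. dist s t < r2 \<longrightarrow> dist (G s) (G t) < pi"
    unfolding continuous_at_eps_delta by (meson pi_gt_zero)
  define r where "r = min r1 r2"
  have eqk: "G s = k s" if s: "s \<in> ball t r" for s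
  proof -
    define z where "z = F s / w"
    have d1: "dist z 1 < 1" using r1 s w unfolding z_def w_def r_def by (auto simp: dist_commute)
    have "\<bar>Re z - 1\<bar> < 1" using d1 abs_Re_le_cmod[of "z - 1"] by (simp add: dist_norm)
    then have Rez: "0 < Re z" by linarith
    have z0: "z \<noteq> 0" using Rez by auto
    have nz1: "norm z = 1" unfolding z_def using w FG by (simp add: norm_divide)
    have "exp (Ln z) = cis (Im (Ln z))" using exp_eq_polar[of "Ln z"] z0 nz1 by simp
    then have "cis (Im (Ln z)) = z" using z0 by simp
    have "cis (k s) = cis (G t) * cis (Im (Ln z))" unfolding k_def z_def by (simp add: cis_mult)
    also have "\<dots> = w * z" using w(1) \<open>cis (Im (Ln z)) = z\<close> by simp
    also have "\<dots> = cis (G s)" unfolding z_def using w FG by simp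
    finally obtain m :: int where m: "G s = k s + 2*pi*m" using cis_eq_int by metis
    have "\<bar>Im (Ln z)\<bar> < pi/2" using Re_Ln_pos_lt_imp Rez by blast
    moreover have "\<bar>G s - G t\<bar> < pi" using r2 s unfolding r_def by (auto simp: dist_real_def dist_commute)
    ultimately have "\<bar>2*pi*m\<bar> < 2*pi*1" using m unfolding k_def z_def by linarith
    then have "\<bar>real_of_int m\<bar> < 1" by (simp add: abs_mult)
    then have "m = 0" by linarith
    then show ?thesis using m by simp
  qed
  have "w \<notin> \<real>\<^sub>\<le>\<^sub>0 \<or> True" by simp
  have "((\<lambda>z. Ln (z / w)) has_field_derivative (inverse (F t / w) * (1 / w))) (at (F t))"
  proof -
    have "((\<lambda>z. z / w) has_field_derivative 1 / w) (at (F t))"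
      using DERIV_cdivide[OF DERIV_ident, of w "F t" UNIV] by blast
    moreover have "(Ln has_field_derivative inverse (F t / w)) (at (F t / w))"
      using w_def w by (intro has_field_derivative_Ln) simp
    ultimately show ?thesis using DERIV_chain[where f=Ln and g="\<lambda>z. z / w" and x="F t" and s=UNIV] unfolding o_def by blast
  qed
  then have "((\<lambda>z. Ln (z / w)) has_field_derivative 1 / w) (at (F t))" using w unfolding w_def by simp
  then have "((\<lambda>s. Ln (F s / w)) has_vector_derivative F' * (1 / w)) (at t)"
    using field_vector_diff_chain_at[OF dF] unfolding o_def by blast
  then have "((\<lambda>s. Im (Ln (F s / w))) has_real_derivative Im (F' / w)) (at t)"
    using vd_Im by fastforce
  then have "(k has_real_derivative Im (F' / w)) (at t)"
  proof -
    have "k = (\<lambda>s. G t + Im (Ln (F s / w)))" unfolding k_def by (simp add: fun_eq_iff)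
    then show ?thesis using DERIV_add[OF DERIV_const[of "G t"] \<open>((\<lambda>s. Im (Ln (F s / w))) has_real_derivative Im (F' / w)) (at t)\<close>] by simp
  qed
  then have dG: "(G has_real_derivative Im (F' / w)) (at t)"
    by (rule has_field_derivative_transform_within_open[of _ _ _ "ball t r"]) (use r1 r2 eqk r_def in auto)
  have "(((\<lambda>z. exp (\<i> * z)) \<circ> (\<lambda>s. complex_of_real (G s))) has_vector_derivative
          (complex_of_real (Im (F' / w)) * (\<i> * exp (\<i> * complex_of_real (G t))))) (at t)"
    by (rule field_vector_diff_chain_at[OF has_vector_derivative_of_real[OF dG]])
       (auto intro!: derivative_eq_intros)
  moreover have "((\<lambda>z. exp (\<i> * z)) \<circ> (\<lambda>s. complex_of_real (G s))) = F"
    using FG by (auto simp: fun_eq_iff cis_conv_exp)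
  ultimately have "F' = complex_of_real (Im (F' / w)) * (\<i> * exp (\<i> * complex_of_real (G t)))"
    using dF vector_derivative_unique_at by metis
  then have "Im (F' / w) \<noteq> 0" using nz by auto
  then show ?thesis using dG by blast
qed



lemma int_pos: "0 < 2*pi*real_of_int k \<Longrightarrow> 1 \<le> k"
  by (simp add: zero_less_mult_iff)

lemma int_neg: "2*pi*real_of_int k < 0 \<Longrightarrow> k \<le> -1"
  by (simp add: mult_less_0_iff)

lemma int_gap: "0 < 2*pi*real_of_int k \<Longrightarrow> 2*pi*real_of_int k < 2*pi \<Longrightarrow> False"
proof -
  assume a: "0 < 2*pi*real_of_int k" "2*pi*real_of_int k < 2*pi"
  have "1 \<le> k" using a(1) by (rule int_pos)
  then have "2*pi*1 \<le> 2*pi*real_of_int k" by (intro mult_left_mono) auto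
  then show False using a(2) by simp
qed

lemma int_gap_neg: "-2*pi < 2*pi*real_of_int k \<Longrightarrow> 2*pi*real_of_int k < 0 \<Longrightarrow> False"
  using int_gap[of "-k"] by simp

lemma band_lemma:
  fixes K :: "real \<Rightarrow> real"
  assumes contK: "continuous_on UNIV K" and K0: "K 0 = 0" and L: "0 < L" "L < 2*pi"
    and B: "\<forall>s\<in>{0..e}. \<exists>r\<in>{0..L}. \<exists>k::int. K s = r + 2*pi*k"
  shows "\<forall>s\<in>{0..e}. 0 \<le> K s \<and> K s \<le> L"
proof
  fix s assume s: "s \<in> {0..e}"
  have contI: "continuous_on I K" for I using contK continuous_on_subset by blast
  have gap: False if u: "u \<in> {0..e}" and Ku: "K u = v" and v: "L < v" "v < 2*pi" for u v
  proof -
    obtain r k where r: "r \<in> {0..L}" and k: "K u = r + 2*pi*real_of_int k" using B u by blast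
    have "0 < 2*pi*real_of_int k" "2*pi*real_of_int k < 2*pi" using r k Ku v unfolding atLeastAtMost_iff by linarith+
    then show False by (rule int_gap)
  qed
  have gap2: False if u: "u \<in> {0..e}" and Ku: "K u = v" and v: "L - 2*pi < v" "v < 0" for u v
  proof -
    obtain r k where r: "r \<in> {0..L}" and k: "K u = r + 2*pi*real_of_int k" using B u by blast
    have "-2*pi < 2*pi*real_of_int k" "2*pi*real_of_int k < 0" using r k Ku v unfolding atLeastAtMost_iff by linarith+
    then show False by (rule int_gap_neg)
  qed
  obtain r k where r: "r \<in> {0..L}" and k: "K s = r + 2*pi*real_of_int k" using B s by blast
  show "0 \<le> K s \<and> K s \<le> L"
  proof (rule ccontr)
    assume "\<not> (0 \<le> K s \<and> K s \<le> L)"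
    then consider "K s < 0" | "L < K s" by linarith
    then show False
    proof cases
      case 1
      then have "2*pi*real_of_int k < 0" using r k by auto
      then have "k \<le> -1" by (rule int_neg)
      then have "real_of_int k \<le> -1" by simp
      then have "2*pi*real_of_int k \<le> -2*pi" using mult_left_mono[of "real_of_int k" "-1" "2*pi"] by simp
      then have "K s \<le> L - 2*pi" using r k L unfolding atLeastAtMost_iff by linarith
      then have "K s \<le> (L - 2*pi)/2" using L by auto
      then obtain u where "0 \<le> u" "u \<le> s" "K u = (L - 2*pi)/2"
        using IVT2'[of K s "(L - 2*pi)/2" 0] K0 L s contI by auto
      then show False using gap2[of u "(L - 2*pi)/2"] s L by auto
    next
      case 2
      then have "0 < 2*pi*real_of_int k" using r k by auto
      then have "1 \<le> k" by (rule int_pos)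
      then have "2*pi*1 \<le> 2*pi*real_of_int k" by (intro mult_left_mono) auto
      then have "2*pi \<le> K s" using r k L unfolding atLeastAtMost_iff by linarith
      then have "(L + 2*pi)/2 \<le> K s" using L by auto
      then obtain u where "0 \<le> u" "u \<le> s" "K u = (L + 2*pi)/2"
        using IVT'[of K 0 "(L + 2*pi)/2" s] K0 L s contI by auto
      then show False using gap[of u "(L + 2*pi)/2"] s L by auto
    qed
  qed
qed



lemma main:
  fixes f :: "complex \<Rightarrow> complex" and F :: "real \<Rightarrow> complex" and G :: "real \<Rightarrow> real"
    and N :: int and \<epsilon> \<sigma> L c d c0 :: real and J P A0 :: "complex set"
  assumes Fdef: "\<forall>t. F t = f (cis t)"
   and contG: "continuous_on UNIV G" and FG: "\<forall>t. F t = cis (G t)"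
   and GN: "\<forall>t. G (t + 2*pi) = G t + 2*pi*N"
   and der: "\<forall>t. F t = x \<or> F t = y \<longrightarrow> (\<exists>D. D \<noteq> 0 \<and> (G has_real_derivative D) (at t))"
   and L: "0 < L" "L < 2*pi"
   and eps: "\<epsilon> = 1 \<or> \<epsilon> = -1" and sig: "\<sigma> = 1 \<or> \<sigma> = -1"
   and Jc: "\<forall>z. z \<in> J \<longleftrightarrow> (\<exists>r\<in>{0..L}. z = x * cis (\<epsilon> * r))"
   and yd: "y = x * cis (\<epsilon> * L)"
   and P: "P = sphere 0 1 \<inter> f -` J"
   and cd: "c < d" "d < c + 2*pi" and A0: "A0 = cis ` {c..d}" "A0 \<subseteq> P"
   and c0: "c0 = (if \<sigma> = 1 then c else d)" and Fc0: "F c0 = x" and Fc1: "F (\<sigma>*(d-c) + c0) = y"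
   and sgn: "\<epsilon> * \<sigma> * N \<le> 0"
  shows "\<exists>p. arc p \<and> path_image p \<subseteq> sphere 0 1 \<and> f (p 0) = x \<and> f (p 1) = x \<and> starts_with p A0 \<and>
     (\<exists>C. C \<in> components P \<and> (\<exists>c' d'. c' < d' \<and> d' < c' + 2*pi \<and> C = cis ` {c'..d'} \<and>
          f (cis c') = (if \<sigma> = 1 then y else x) \<and> f (cis d') = (if \<sigma> = 1 then x else y)) \<and> ends_with p C) \<and>
     (\<exists>g. continuous_on {0..1} g \<and> g 0 = 0 \<and> g 1 = 0 \<and> (\<forall>t\<in>{0..1}. f (p t) = x * cis (g t)))"
proof -
  define \<phi> where "\<phi> s = \<sigma> * s + c0" for s
  define K where "K s = \<epsilon> * (G (\<phi> s) - G c0)" for s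
  define e where "e = d - c"
  have e: "0 < e" "e < 2*pi" using cd unfolding e_def by auto
  have ee: "\<epsilon> * \<epsilon> = 1" using eps by auto
  have ss: "\<sigma> * \<sigma> = 1" using sig by auto
  have x: "x = cis (G c0)" using Fc0 FG by metis
  have x0: "x \<noteq> 0" using x by auto
  have eK: "\<epsilon> * K s = G (\<phi> s) - G c0" for s unfolding K_def using ee by (simp add: mult.assoc[symmetric])
  have Fphi: "F (\<phi> s) = x * cis (\<epsilon> * K s)" for s
    unfolding eK x using FG by (simp add: cis_mult)
  have inJ: "F (\<phi> s) \<in> J \<longleftrightarrow> (\<exists>r\<in>{0..L}. \<exists>k::int. K s = r + 2*pi*k)" for s
  proof -
    have "F (\<phi> s) \<in> J \<longleftrightarrow> (\<exists>r\<in>{0..L}. cis (\<epsilon> * K s) = cis (\<epsilon> * r))"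
      unfolding Fphi using Jc[rule_format, of "x * cis (\<epsilon> * K s)"] x0 by simp
    also have "\<dots> \<longleftrightarrow> (\<exists>r\<in>{0..L}. \<exists>k::int. K s = r + 2*pi*k)"
    proof -
      have "cis (\<epsilon> * K s) = cis (\<epsilon> * r) \<longleftrightarrow> (\<exists>k::int. K s = r + 2*pi*k)" for r
      proof -
        have "cis (\<epsilon> * K s) = cis (\<epsilon> * r) \<longleftrightarrow> (\<exists>k::int. \<epsilon> * K s = \<epsilon> * r + 2*pi*k)" by (rule cis_eq_int)
        also have "\<dots> \<longleftrightarrow> (\<exists>k::int. K s = r + 2*pi*k)"
        proof
          assume "\<exists>k::int. \<epsilon> * K s = \<epsilon> * r + 2*pi*k"
          then obtain k :: int where k: "\<epsilon> * K s = \<epsilon> * r + 2*pi*k" by blast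
          show "\<exists>k::int. K s = r + 2*pi*k"
            using eps proof
            assume "\<epsilon> = 1" then show ?thesis using k by auto
          next
            assume "\<epsilon> = -1" then have "K s = r + 2*pi* of_int (-k)" using k by simp
            then show ?thesis by blast
          qed
        next
          assume "\<exists>k::int. K s = r + 2*pi*k"
          then obtain k :: int where k: "K s = r + 2*pi*k" by blast
          show "\<exists>k::int. \<epsilon> * K s = \<epsilon> * r + 2*pi*k"
            using eps proof
            assume "\<epsilon> = 1" then show ?thesis using k by auto
          next
            assume "\<epsilon> = -1" then have "\<epsilon> * K s = \<epsilon> * r + 2*pi* of_int (-k)" using k by simp
            then show ?thesis by blast
          qed
        qed
        finally show ?thesis .
      qed
      then show ?thesis by simp
    qed
    finally show ?thesis .
  qed
  have contphi: "continuous_on UNIV \<phi>" unfolding \<phi>_def[abs_def] by (intro continuous_intros)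
  have contK: "continuous_on UNIV K" unfolding K_def[abs_def]
    by (intro continuous_intros continuous_on_compose2[OF contG contphi]) auto
  have K0: "K 0 = 0" unfolding K_def \<phi>_def by simp
  have Gshift: "G (\<phi> (s + 2*pi)) = G (\<phi> s) + \<sigma> * (2*pi*N)" for s
    using sig proof
    assume "\<sigma> = 1"
    then have "\<phi> (s + 2*pi) = \<phi> s + 2*pi" unfolding \<phi>_def by simp
    then show ?thesis using GN \<open>\<sigma> = 1\<close> by simp
  next
    assume s1: "\<sigma> = -1"
    have "G (\<phi> s) = G (\<phi> (s + 2*pi) + 2*pi)" unfolding \<phi>_def s1 by (simp add: algebra_simps)
    also have "\<dots> = G (\<phi> (s + 2*pi)) + 2*pi*N" using GN by simp
    finally show ?thesis using s1 by simp
  qed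
  have K2pi: "K (2*pi) = \<epsilon> * \<sigma> * (2*pi*N)"
    using Gshift[of 0] unfolding K_def by (simp add: \<phi>_def algebra_simps)
  have per: "\<forall>s. K (s + 2*pi) = K s + K (2*pi)"
    using Gshift unfolding K2pi unfolding K_def by (simp add: algebra_simps)
  have neg: "K (2*pi) \<le> 0"
  proof -
    have "\<epsilon> * \<sigma> * (2*pi*N) = (2*pi) * (\<epsilon> * \<sigma> * N)" by simp
    also have "\<dots> \<le> 0" using mult_nonneg_nonpos[of "2*pi" "\<epsilon> * \<sigma> * real_of_int N"] sgn pi_gt_zero by linarith
    finally show ?thesis using K2pi by simp
  qed
  have phi_img: "\<phi> ` {0..e} = {c..d}"
    using sig proof
    assume s1: "\<sigma> = 1"
    have "\<phi> ` {0..e} = (\<lambda>s. 1 * s + c) ` {0..e}" unfolding \<phi>_def s1 c0 by simp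
    also have "\<dots> = {c..d}" unfolding image_affinity_atLeastAtMost using e unfolding e_def by simp
    finally show ?thesis .
  next
    assume s1: "\<sigma> = -1"
    have "\<phi> ` {0..e} = (\<lambda>s. (-1) * s + d) ` {0..e}" unfolding \<phi>_def s1 c0 by simp
    also have "\<dots> = {c..d}" unfolding image_affinity_atLeastAtMost using e unfolding e_def by simp
    finally show ?thesis .
  qed
  have Bnd: "\<forall>s\<in>{0..e}. \<exists>r\<in>{0..L}. \<exists>k::int. K s = r + 2*pi*k"
  proof
    fix s assume s: "s \<in> {0..e}"
    then have "cis (\<phi> s) \<in> P" using phi_img A0 by blast
    then have "F (\<phi> s) \<in> J" using P Fdef by auto
    then show "\<exists>r\<in>{0..L}. \<exists>k::int. K s = r + 2*pi*k" using inJ by blast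
  qed
  have band: "\<forall>s\<in>{0..e}. 0 \<le> K s \<and> K s \<le> L"
    by (rule band_lemma[OF contK K0 L Bnd])
  have Ke: "K e = L"
  proof -
    have "F (\<phi> e) = x * cis (\<epsilon> * L)" using Fc1 yd unfolding \<phi>_def e_def by simp
    then have "F (\<phi> e) \<in> J" using Jc L by auto
    have "cis (\<epsilon> * K e) = cis (\<epsilon> * L)" using Fphi[of e] \<open>F (\<phi> e) = x * cis (\<epsilon> * L)\<close> x0 by simp
    then obtain k :: int where k: "\<epsilon> * K e = \<epsilon> * L + 2*pi*k" using cis_eq_int by metis
    have kk: "K e = L + 2*pi*(\<epsilon> * k)" using k eps by auto
    have "0 \<le> K e" "K e \<le> L" using band e by auto
    show ?thesis
    proof (rule ccontr)
      assume "K e \<noteq> L"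
      then have "K e < L" using \<open>K e \<le> L\<close> by auto
      then have "2*pi*(\<epsilon>*k) < 0" "-2*pi < 2*pi*(\<epsilon>*k)" using kk \<open>0 \<le> K e\<close> L by linarith+
      moreover have "\<epsilon> * k = real_of_int k \<or> \<epsilon> * k = real_of_int (-k)" using eps by auto
      ultimately show False using int_gap_neg by metis
    qed
  qed
  have derK: "\<forall>s. K s = 0 \<or> K s = L \<longrightarrow> (\<exists>D. D \<noteq> 0 \<and> (K has_real_derivative D) (at s))"
  proof (intro allI impI)
    fix s assume "K s = 0 \<or> K s = L"
    then have "F (\<phi> s) = x \<or> F (\<phi> s) = y" using Fphi yd by auto
    then obtain D where D: "D \<noteq> 0" "(G has_real_derivative D) (at (\<phi> s))" using der by blast
    have "(\<phi> has_real_derivative \<sigma>) (at s)" unfolding \<phi>_def[abs_def] by (auto intro!: derivative_eq_intros)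
    then have "((G \<circ> \<phi>) has_real_derivative D * \<sigma>) (at s)" using DERIV_chain[where f=G and g=\<phi> and x=s and s=UNIV] D(2) by blast
    then have "((\<lambda>s. \<epsilon> * (G (\<phi> s) - G c0)) has_real_derivative \<epsilon> * (D * \<sigma> - 0)) (at s)"
      unfolding o_def by (intro DERIV_cmult DERIV_diff DERIV_const)
    moreover have "K = (\<lambda>s. \<epsilon> * (G (\<phi> s) - G c0))" unfolding K_def by (simp add: fun_eq_iff)
    moreover have "\<epsilon> * (D * \<sigma> - 0) \<noteq> 0" using D eps sig by auto
    ultimately show "\<exists>D. D \<noteq> 0 \<and> (K has_real_derivative D) (at s)" by metis
  qed
  obtain t1 t2 \<delta> where T: "e < t1" "t1 < t2" "t2 < 2*pi" "K t1 = L" "K t2 = 0"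
     "\<forall>s\<in>{t1..t2}. 0 \<le> K s \<and> K s \<le> L" "0 < \<delta>" "t2 - t1 + 2*\<delta> < 2*pi"
     "\<forall>s. t1 - \<delta> < s \<and> s < t1 \<longrightarrow> L < K s \<and> K s < 2*pi"
     "\<forall>s. t2 < s \<and> s < t2 + \<delta> \<longrightarrow> L - 2*pi < K s \<and> K s < 0"
    using core[OF contK L e K0 Ke band per neg derK] by blast
  define \<alpha> where "\<alpha> = (if \<sigma> = 1 then c0 + t1 else c0 - t2)"
  define \<beta> where "\<beta> = (if \<sigma> = 1 then c0 + t2 else c0 - t1)"
  have ab: "\<alpha> < \<beta>" "\<beta> - \<alpha> = t2 - t1" unfolding \<alpha>_def \<beta>_def using T by auto
  have aff: "(\<lambda>u. (\<sigma>*t2) * u + c0) ` {lo/t2..hi/t2} = \<phi> ` {lo..hi}" if "lo \<le> hi" for lo hi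
  proof -
    have t2: "0 < t2" using T e by auto
    have "\<phi> = (\<lambda>s. \<sigma> * s + c0)" unfolding \<phi>_def by (simp add: fun_eq_iff)
    moreover have "lo/t2 \<le> hi/t2" using that t2 by (simp add: divide_right_mono)
    moreover have "(0 \<le> \<sigma>*t2) = (0 \<le> \<sigma>)" using t2 by (simp add: zero_le_mult_iff)
    ultimately show ?thesis
      using image_affinity_atLeastAtMost[of "\<sigma>*t2" c0 "lo/t2" "hi/t2"] image_affinity_atLeastAtMost[of \<sigma> c0 lo hi] that t2
      by simp
  qed
  have phi12: "\<phi> ` {t1..t2} = {\<alpha>..\<beta>}"
    using sig proof
    assume s1: "\<sigma> = 1"
    have "\<phi> ` {t1..t2} = (\<lambda>s. 1 * s + c0) ` {t1..t2}" unfolding \<phi>_def s1 by simp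
    also have "\<dots> = {\<alpha>..\<beta>}" unfolding image_affinity_atLeastAtMost \<alpha>_def \<beta>_def using T s1 by (simp add: add.commute)
    finally show ?thesis .
  next
    assume s1: "\<sigma> = -1"
    have "\<phi> ` {t1..t2} = (\<lambda>s. (-1) * s + c0) ` {t1..t2}" unfolding \<phi>_def s1 by simp
    also have "\<dots> = {\<alpha>..\<beta>}" unfolding image_affinity_atLeastAtMost \<alpha>_def \<beta>_def using T s1 by auto
    finally show ?thesis .
  qed
  have phiinv: "\<phi> (\<sigma> * (t - c0)) = t" for t unfolding \<phi>_def using ss by (simp add: algebra_simps mult.assoc[symmetric])
  have PQ: "\<forall>t. cis t \<in> P \<longleftrightarrow> F t \<in> J" using P Fdef by auto
  have PS: "P \<subseteq> sphere 0 1" using P by auto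
  have inside: "\<forall>t\<in>{\<alpha>..\<beta>}. F t \<in> J"
  proof
    fix t assume "t \<in> {\<alpha>..\<beta>}"
    then obtain s where s: "s \<in> {t1..t2}" "t = \<phi> s" using phi12 by (metis imageE)
    then have "K s \<in> {0..L}" using T by auto
    then have "\<exists>r\<in>{0..L}. \<exists>k::int. K s = r + 2*pi*k" by (intro bexI[of _ "K s"] exI[of _ 0]) auto
    then show "F t \<in> J" using inJ s by blast
  qed
  have notJ1: "F (\<phi> s) \<notin> J" if "t1 - \<delta> < s" "s < t1" for s
  proof
    assume "F (\<phi> s) \<in> J"
    then obtain r k where r: "r \<in> {0..L}" and k: "K s = r + 2*pi*real_of_int k" using inJ by blast
    have "L < K s" "K s < 2*pi" using T that by auto
    then have "0 < 2*pi*real_of_int k" "2*pi*real_of_int k < 2*pi" using r k unfolding atLeastAtMost_iff by linarith+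
    then show False by (rule int_gap)
  qed
  have notJ2: "F (\<phi> s) \<notin> J" if "t2 < s" "s < t2 + \<delta>" for s
  proof
    assume "F (\<phi> s) \<in> J"
    then obtain r k where r: "r \<in> {0..L}" and k: "K s = r + 2*pi*real_of_int k" using inJ by blast
    have "L - 2*pi < K s" "K s < 0" using T that by auto
    then have "-2*pi < 2*pi*real_of_int k" "2*pi*real_of_int k < 0" using r k unfolding atLeastAtMost_iff by linarith+
    then show False by (rule int_gap_neg)
  qed
  have left: "\<forall>t. \<alpha> - \<delta> < t \<and> t < \<alpha> \<longrightarrow> F t \<notin> J"
  proof (intro allI impI)
    fix t assume t: "\<alpha> - \<delta> < t \<and> t < \<alpha>"
    show "F t \<notin> J"
      using sig proof
      assume s1: "\<sigma> = 1"
      then show ?thesis using notJ1[of "\<sigma> * (t - c0)"] phiinv[of t] t unfolding \<alpha>_def by auto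
    next
      assume s1: "\<sigma> = -1"
      then show ?thesis using notJ2[of "\<sigma> * (t - c0)"] phiinv[of t] t unfolding \<alpha>_def by auto
    qed
  qed
  have right: "\<forall>t. \<beta> < t \<and> t < \<beta> + \<delta> \<longrightarrow> F t \<notin> J"
  proof (intro allI impI)
    fix t assume t: "\<beta> < t \<and> t < \<beta> + \<delta>"
    show "F t \<notin> J"
      using sig proof
      assume s1: "\<sigma> = 1"
      then show ?thesis using notJ2[of "\<sigma> * (t - c0)"] phiinv[of t] t unfolding \<beta>_def by auto
    next
      assume s1: "\<sigma> = -1"
      then show ?thesis using notJ1[of "\<sigma> * (t - c0)"] phiinv[of t] t unfolding \<beta>_def by auto
    qed
  qed
  have comp: "cis ` {\<alpha>..\<beta>} \<in> components P"
    by (rule arc_component[OF PQ PS ab(1) T(7)]) (use ab T inside left right in auto)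
  have Ft1: "F (\<phi> t1) = y" using Fphi[of t1] T yd by simp
  have Ft2: "F (\<phi> t2) = x" using Fphi[of t2] T by simp
  have ends: "f (cis \<alpha>) = (if \<sigma> = 1 then y else x) \<and> f (cis \<beta>) = (if \<sigma> = 1 then x else y)"
    using Ft1 Ft2 sig Fdef unfolding \<alpha>_def \<beta>_def \<phi>_def by (auto simp: add.commute)
  define p where "p u = cis ((\<sigma>*t2) * u + c0)" for u
  have t2pos: "0 < t2" using T e by auto
  have pimg: "p ` {lo/t2..hi/t2} = cis ` (\<phi> ` {lo..hi})" if "lo \<le> hi" for lo hi
  proof -
    have "p ` {lo/t2..hi/t2} = cis ` ((\<lambda>u. (\<sigma>*t2) * u + c0) ` {lo/t2..hi/t2})"
      unfolding p_def by (simp add: image_image)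
    then show ?thesis using aff[OF that] by simp
  qed
  have contp: "continuous_on UNIV p" unfolding p_def[abs_def] by (intro continuous_intros)
  have injp: "inj_on p {0..1}"
  proof (rule inj_onI)
    fix u v assume u: "u \<in> {0..1}" and v: "v \<in> {0..1}" and "p u = p v"
    then obtain k :: int where k: "(\<sigma>*t2) * u + c0 = (\<sigma>*t2) * v + c0 + 2*pi*k" unfolding p_def using cis_eq_int by metis
    have kk: "2*pi*k = \<sigma> * (t2 * (u - v))" using k by (simp add: algebra_simps)
    have "\<bar>t2 * (u - v)\<bar> \<le> t2 * 1" using u v t2pos by (auto simp: abs_mult intro!: mult_left_mono)
    then have b: "\<bar>2*pi*k\<bar> < 2*pi" using kk sig T by (auto simp: abs_mult)
    have "k = 0"
    proof (rule ccontr)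
      assume "k \<noteq> 0"
      then consider "0 < k" | "k < 0" by linarith
      then show False
      proof cases
        case 1 then have "0 < 2*pi*real_of_int k" by simp
        then show False using int_gap[of k] b by linarith
      next
        case 2 then have "2*pi*real_of_int k < 0" by (simp add: mult_less_0_iff)
        then show False using int_gap_neg[of k] b by linarith
      qed
    qed
    then have "\<sigma> * (t2 * (u - v)) = 0" using kk by simp
    then show "u = v" using sig t2pos by auto
  qed
  show ?thesis
  proof (intro exI conjI)
    show "arc p" unfolding arc_def path_def using contp injp continuous_on_subset by blast
    show "path_image p \<subseteq> sphere 0 1" unfolding path_image_def p_def by auto
    show "f (p 0) = x" unfolding p_def using Fc0 Fdef by simp
    show "f (p 1) = x" using Ft2 Fdef unfolding p_def \<phi>_def by simp
    show "starts_with p A0" unfolding starts_with_def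
    proof (intro exI conjI)
      show "0 < e / t2" "e / t2 \<le> 1" using e T t2pos by auto
      show "p ` {0..e/t2} = A0" using pimg[of 0 e] e phi_img A0 by simp
    qed
    show "cis ` {\<alpha>..\<beta>} \<in> components P" by (rule comp)
    show "\<alpha> < \<beta>" "\<beta> < \<alpha> + 2*pi" using ab T by auto
    show "cis ` {\<alpha>..\<beta>} = cis ` {\<alpha>..\<beta>}" by simp
    show "f (cis \<alpha>) = (if \<sigma> = 1 then y else x)" "f (cis \<beta>) = (if \<sigma> = 1 then x else y)" using ends by auto
    show "ends_with p (cis ` {\<alpha>..\<beta>})" unfolding ends_with_def
    proof (intro exI conjI)
      show "0 \<le> t1 / t2" "t1 / t2 < 1" using e T t2pos by auto
      have "p ` {t1/t2..t2/t2} = cis ` {\<alpha>..\<beta>}" using pimg[of t1 t2] T phi12 by simp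
      then show "p ` {t1/t2..1} = cis ` {\<alpha>..\<beta>}" using t2pos by simp
    qed
    show "continuous_on {0..1} (\<lambda>u. G ((\<sigma>*t2) * u + c0) - G c0)"
      by (intro continuous_intros continuous_on_compose2[OF contG]) auto
    show "G ((\<sigma>*t2)*0 + c0) - G c0 = 0" by simp
    show "G ((\<sigma>*t2)*1 + c0) - G c0 = 0" using eK[of t2] T unfolding \<phi>_def by simp
    show "\<forall>u\<in>{0..1}. f (p u) = x * cis (G ((\<sigma>*t2) * u + c0) - G c0)"
    proof
      fix u :: real
      have "f (p u) = F (\<phi> (t2 * u))" using Fdef unfolding p_def \<phi>_def by (simp add: mult.assoc)
      also have "\<dots> = x * cis (\<epsilon> * K (t2*u))" by (rule Fphi)
      also have "\<dots> = x * cis (G ((\<sigma>*t2) * u + c0) - G c0)" unfolding eK \<phi>_def by (simp add: mult.assoc)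
      finally show "f (p u) = x * cis (G ((\<sigma>*t2) * u + c0) - G c0)" .
    qed
  qed
qed



theorem lemma3:
  fixes f :: "complex \<Rightarrow> complex" and a b :: real and x y :: complex
    and Jp Jm :: "complex set"
  assumes "smooth_circle_map f"
    and "self_transverse f"
    and "a < b" and "b < a + 2 * pi"
    and "(x = cis a \<and> y = cis b) \<or> (x = cis b \<and> y = cis a)"
    and "regular_value f x" and "regular_value f y"
    and "positive_arc f a b Jp" and "negative_arc f a b Jm"
  shows "\<exists>p :: real \<Rightarrow> complex.
           arc p \<and> path_image p \<subseteq> S1 \<and> f (p 0) = x \<and> f (p 1) = x \<and>
           ((starts_with p Jp \<and> (\<exists>Jm'. negative_arc f a b Jm' \<and> ends_with p Jm')) \<or>
            (starts_with p Jm \<and> (\<exists>Jp'. positive_arc f a b Jp' \<and> ends_with p Jp'))) \<and>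
           (\<exists>g :: real \<Rightarrow> real. continuous_on {0..1} g \<and> g 0 = 0 \<and> g 1 = 0 \<and>
              (\<forall>t\<in>{0..1}. f (p t) = x * cis (g t)))"
proof -
  note sm = assms(1)[unfolded smooth_circle_map_def smooth_real_fun_def]
  obtain Dd where Dd: "Dd 0 = (\<lambda>t. f (cis t))" "\<forall>n t. (Dd n has_vector_derivative Dd (Suc n) t) (at t)"
    using sm by blast
  define F where "F t = f (cis t)" for t
  have Fdef: "\<forall>t. F t = f (cis t)" unfolding F_def by simp
  have FD: "(F has_vector_derivative Dd 1 t) (at t)" for t
    using Dd unfolding F_def[abs_def] by (metis One_nat_def)
  have cdF: "cdiff f t = Dd 1 t" for t
    unfolding cdiff_def using FD[of t] unfolding F_def[abs_def] by (rule vector_derivative_at)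
  have contF: "continuous_on UNIV F"
    by (intro continuous_at_imp_continuous_on ballI has_vector_derivative_continuous[OF FD])
  have nF: "\<forall>t. norm (F t) = 1"
  proof
    fix t
    have "cis t \<in> S1" by simp
    then have "f (cis t) \<in> S1" using sm by blast
    then show "norm (F t) = 1" unfolding F_def by simp
  qed
  obtain G where contG: "continuous_on UNIV G" and FG: "\<forall>t. F t = cis (G t)"
    using lift_exists[OF contF nF] by blast
  have perF: "\<forall>t. F (t + 2*pi) = F t"
  proof
    fix t
    have "cis (t + 2*pi) = cis t" using cis_shift_int[of t 1] by simp
    then show "F (t + 2*pi) = F t" unfolding F_def by simp
  qed
  obtain N :: int where GN: "\<forall>t. G (t + 2*pi) = G t + 2*pi*N"
    using lift_period[OF contG FG perF] by blast
  have der: "\<forall>t. F t = x \<or> F t = y \<longrightarrow> (\<exists>D. D \<noteq> 0 \<and> (G has_real_derivative D) (at t))"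
  proof (intro allI impI)
    fix t assume "F t = x \<or> F t = y"
    then have "cdiff f t \<noteq> 0" using assms(6,7) unfolding regular_value_def F_def by blast
    then have "Dd 1 t \<noteq> 0" using cdF by simp
    then show "\<exists>D. D \<noteq> 0 \<and> (G has_real_derivative D) (at t)"
      using lift_deriv[OF contG FG FD] by blast
  qed
  define L where "L = b - a"
  have L: "0 < L" "L < 2*pi" using assms(3,4) unfolding L_def by auto
  define J where "J = cis ` {a..b}"
  define P where "P = S1 \<inter> f -` J"
  obtain cp dp where cpd: "cp < dp" "dp < cp + 2*pi" "Jp = cis ` {cp..dp}" "f (cis cp) = cis a" "f (cis dp) = cis b"
    and Jpc: "Jp \<in> components P"
    using assms(8) unfolding positive_arc_def P_def J_def by blast
  obtain cm dm where cmd: "cm < dm" "dm < cm + 2*pi" "Jm = cis ` {cm..dm}" "f (cis cm) = cis b" "f (cis dm) = cis a"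
    and Jmc: "Jm \<in> components P"
    using assms(9) unfolding negative_arc_def P_def J_def by blast
  have JpP: "Jp \<subseteq> P" using Jpc in_components_subset by blast
  have JmP: "Jm \<subseteq> P" using Jmc in_components_subset by blast
  have negI: "negative_arc f a b C" if "C \<in> components P" "c' < d'" "d' < c' + 2*pi" "C = cis ` {c'..d'}"
     "f (cis c') = cis b" "f (cis d') = cis a" for C c' d'
    using that unfolding negative_arc_def P_def J_def by blast
  have posI: "positive_arc f a b C" if "C \<in> components P" "c' < d'" "d' < c' + 2*pi" "C = cis ` {c'..d'}"
     "f (cis c') = cis a" "f (cis d') = cis b" for C c' d'
    using that unfolding positive_arc_def P_def J_def by blast
  have Pd: "P = sphere 0 1 \<inter> f -` J" unfolding P_def by simp
  from assms(5) show ?thesis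
  proof
    assume xy: "x = cis a \<and> y = cis b"
    have Jc: "\<forall>z. z \<in> J \<longleftrightarrow> (\<exists>r\<in>{0..L}. z = x * cis (1 * r))"
    proof
      fix z
      show "z \<in> J \<longleftrightarrow> (\<exists>r\<in>{0..L}. z = x * cis (1 * r))"
      proof
        assume "z \<in> J" then obtain t where "t \<in> {a..b}" "z = cis t" unfolding J_def by blast
        then show "\<exists>r\<in>{0..L}. z = x * cis (1 * r)" using xy unfolding L_def
          by (intro bexI[of _ "t - a"]) (auto simp: cis_mult)
      next
        assume "\<exists>r\<in>{0..L}. z = x * cis (1 * r)"
        then obtain r where "r \<in> {0..L}" "z = x * cis r" by auto
        then show "z \<in> J" using xy unfolding J_def L_def by (auto simp: cis_mult intro!: image_eqI[of _ _ "a + r"])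
      qed
    qed

    have yd: "y = x * cis (1 * L)" using xy unfolding L_def by (simp add: cis_mult)
    show ?thesis
    proof (cases "N \<le> 0")
      case True
      have e1: "(1::real) = 1 \<or> (1::real) = -1" by simp
      have s1: "(1::real) = 1 \<or> (1::real) = -1" by simp
      have h0: "cp = (if (1::real) = 1 then cp else dp)" by simp
      have h1: "F cp = x" using xy cpd Fdef by simp
      have h2: "F ((1::real) * (dp - cp) + cp) = y" using xy cpd Fdef by simp
      have h3: "(1::real) * (1::real) * real_of_int N \<le> 0" using True by simp
      have ex: "\<exists>p. arc p \<and> path_image p \<subseteq> sphere 0 1 \<and> f (p 0) = x \<and> f (p 1) = x \<and> starts_with p Jp \<and>
        (\<exists>C. C \<in> components P \<and> (\<exists>c' d'. c' < d' \<and> d' < c' + 2*pi \<and> C = cis ` {c'..d'} \<and>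
          f (cis c') = (if (1::real) = 1 then y else x) \<and> f (cis d') = (if (1::real) = 1 then x else y)) \<and> ends_with p C) \<and>
        (\<exists>g. continuous_on {0..1} g \<and> g 0 = 0 \<and> g 1 = 0 \<and> (\<forall>t\<in>{0..1}. f (p t) = x * cis (g t)))"
        by (rule main[OF Fdef contG FG GN der L e1 s1 Jc yd Pd cpd(1,2,3) JpP h0 h1 h2 h3])
      have i1: "(if (1::real) = 1 then y else x) = y" by simp
      have i2: "(if (1::real) = 1 then x else y) = x" by simp
      from ex[unfolded i1 i2] obtain p C c' d' where pp: "arc p" "path_image p \<subseteq> sphere 0 1" "f (p 0) = x" "f (p 1) = x" "starts_with p Jp"
        and CC: "C \<in> components P" "c' < d'" "d' < c' + 2*pi" "C = cis ` {c'..d'}" "f (cis c') = y" "f (cis d') = x" "ends_with p C"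
        and gg: "\<exists>g. continuous_on {0..1} g \<and> g 0 = 0 \<and> g 1 = 0 \<and> (\<forall>t\<in>{0..1}. f (p t) = x * cis (g t))"
        by blast
      have "negative_arc f a b C" by (rule negI[OF CC(1-4)]) (use CC xy in auto)
      then show ?thesis using pp CC(7) gg by blast
    next
      case False
      have e1: "(1::real) = 1 \<or> (1::real) = -1" by simp
      have s1: "(-1::real) = 1 \<or> (-1::real) = -1" by simp
      have h0: "dm = (if (-1::real) = 1 then cm else dm)" by simp
      have h1: "F dm = x" using xy cmd Fdef by simp
      have h2: "F ((-1::real) * (dm - cm) + dm) = y" using xy cmd Fdef by simp
      have h3: "(1::real) * (-1::real) * real_of_int N \<le> 0" using False by simp
      have ex: "\<exists>p. arc p \<and> path_image p \<subseteq> sphere 0 1 \<and> f (p 0) = x \<and> f (p 1) = x \<and> starts_with p Jm \<and>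
        (\<exists>C. C \<in> components P \<and> (\<exists>c' d'. c' < d' \<and> d' < c' + 2*pi \<and> C = cis ` {c'..d'} \<and>
          f (cis c') = (if (-1::real) = 1 then y else x) \<and> f (cis d') = (if (-1::real) = 1 then x else y)) \<and> ends_with p C) \<and>
        (\<exists>g. continuous_on {0..1} g \<and> g 0 = 0 \<and> g 1 = 0 \<and> (\<forall>t\<in>{0..1}. f (p t) = x * cis (g t)))"
        by (rule main[OF Fdef contG FG GN der L e1 s1 Jc yd Pd cmd(1,2,3) JmP h0 h1 h2 h3])
      have i1: "(if (-1::real) = 1 then y else x) = x" by simp
      have i2: "(if (-1::real) = 1 then x else y) = y" by simp
      from ex[unfolded i1 i2] obtain p C c' d' where pp: "arc p" "path_image p \<subseteq> sphere 0 1" "f (p 0) = x" "f (p 1) = x" "starts_with p Jm"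
        and CC: "C \<in> components P" "c' < d'" "d' < c' + 2*pi" "C = cis ` {c'..d'}" "f (cis c') = x" "f (cis d') = y" "ends_with p C"
        and gg: "\<exists>g. continuous_on {0..1} g \<and> g 0 = 0 \<and> g 1 = 0 \<and> (\<forall>t\<in>{0..1}. f (p t) = x * cis (g t))"
        by blast
      have "positive_arc f a b C" by (rule posI[OF CC(1-4)]) (use CC xy in auto)
      then show ?thesis using pp CC(7) gg by blast
    qed
  next
    assume xy: "x = cis b \<and> y = cis a"
    have Jc: "\<forall>z. z \<in> J \<longleftrightarrow> (\<exists>r\<in>{0..L}. z = x * cis (-1 * r))"
    proof
      fix z
      show "z \<in> J \<longleftrightarrow> (\<exists>r\<in>{0..L}. z = x * cis (-1 * r))"
      proof
        assume "z \<in> J" then obtain t where "t \<in> {a..b}" "z = cis t" unfolding J_def by blast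
        then show "\<exists>r\<in>{0..L}. z = x * cis (-1 * r)" using xy unfolding L_def
          by (intro bexI[of _ "b - t"]) (auto simp: cis_mult)
      next
        assume "\<exists>r\<in>{0..L}. z = x * cis (-1 * r)"
        then obtain r where "r \<in> {0..L}" "z = x * cis (- r)" by auto
        then show "z \<in> J" using xy unfolding J_def L_def by (auto simp: cis_mult intro!: image_eqI[of _ _ "b - r"])
      qed
    qed

    have yd: "y = x * cis (-1 * L)" using xy unfolding L_def by (simp add: cis_mult)
    show ?thesis
    proof (cases "0 \<le> N")
      case True
      have e1: "(-1::real) = 1 \<or> (-1::real) = -1" by simp
      have s1: "(1::real) = 1 \<or> (1::real) = -1" by simp
      have h0: "cm = (if (1::real) = 1 then cm else dm)" by simp
      have h1: "F cm = x" using xy cmd Fdef by simp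
      have h2: "F ((1::real) * (dm - cm) + cm) = y" using xy cmd Fdef by simp
      have h3: "(-1::real) * (1::real) * real_of_int N \<le> 0" using True by simp
      have ex: "\<exists>p. arc p \<and> path_image p \<subseteq> sphere 0 1 \<and> f (p 0) = x \<and> f (p 1) = x \<and> starts_with p Jm \<and>
        (\<exists>C. C \<in> components P \<and> (\<exists>c' d'. c' < d' \<and> d' < c' + 2*pi \<and> C = cis ` {c'..d'} \<and>
          f (cis c') = (if (1::real) = 1 then y else x) \<and> f (cis d') = (if (1::real) = 1 then x else y)) \<and> ends_with p C) \<and>
        (\<exists>g. continuous_on {0..1} g \<and> g 0 = 0 \<and> g 1 = 0 \<and> (\<forall>t\<in>{0..1}. f (p t) = x * cis (g t)))"
        by (rule main[OF Fdef contG FG GN der L e1 s1 Jc yd Pd cmd(1,2,3) JmP h0 h1 h2 h3])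
      have i1: "(if (1::real) = 1 then y else x) = y" by simp
      have i2: "(if (1::real) = 1 then x else y) = x" by simp
      from ex[unfolded i1 i2] obtain p C c' d' where pp: "arc p" "path_image p \<subseteq> sphere 0 1" "f (p 0) = x" "f (p 1) = x" "starts_with p Jm"
        and CC: "C \<in> components P" "c' < d'" "d' < c' + 2*pi" "C = cis ` {c'..d'}" "f (cis c') = y" "f (cis d') = x" "ends_with p C"
        and gg: "\<exists>g. continuous_on {0..1} g \<and> g 0 = 0 \<and> g 1 = 0 \<and> (\<forall>t\<in>{0..1}. f (p t) = x * cis (g t))"
        by blast
      have "positive_arc f a b C" by (rule posI[OF CC(1-4)]) (use CC xy in auto)
      then show ?thesis using pp CC(7) gg by blast
    next
      case False
      have e1: "(-1::real) = 1 \<or> (-1::real) = -1" by simp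
      have s1: "(-1::real) = 1 \<or> (-1::real) = -1" by simp
      have h0: "dp = (if (-1::real) = 1 then cp else dp)" by simp
      have h1: "F dp = x" using xy cpd Fdef by simp
      have h2: "F ((-1::real) * (dp - cp) + dp) = y" using xy cpd Fdef by simp
      have h3: "(-1::real) * (-1::real) * real_of_int N \<le> 0" using False by simp
      have ex: "\<exists>p. arc p \<and> path_image p \<subseteq> sphere 0 1 \<and> f (p 0) = x \<and> f (p 1) = x \<and> starts_with p Jp \<and>
        (\<exists>C. C \<in> components P \<and> (\<exists>c' d'. c' < d' \<and> d' < c' + 2*pi \<and> C = cis ` {c'..d'} \<and>
          f (cis c') = (if (-1::real) = 1 then y else x) \<and> f (cis d') = (if (-1::real) = 1 then x else y)) \<and> ends_with p C) \<and>
        (\<exists>g. continuous_on {0..1} g \<and> g 0 = 0 \<and> g 1 = 0 \<and> (\<forall>t\<in>{0..1}. f (p t) = x * cis (g t)))"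
        by (rule main[OF Fdef contG FG GN der L e1 s1 Jc yd Pd cpd(1,2,3) JpP h0 h1 h2 h3])
      have i1: "(if (-1::real) = 1 then y else x) = x" by simp
      have i2: "(if (-1::real) = 1 then x else y) = y" by simp
      from ex[unfolded i1 i2] obtain p C c' d' where pp: "arc p" "path_image p \<subseteq> sphere 0 1" "f (p 0) = x" "f (p 1) = x" "starts_with p Jp"
        and CC: "C \<in> components P" "c' < d'" "d' < c' + 2*pi" "C = cis ` {c'..d'}" "f (cis c') = x" "f (cis d') = y" "ends_with p C"
        and gg: "\<exists>g. continuous_on {0..1} g \<and> g 0 = 0 \<and> g 1 = 0 \<and> (\<forall>t\<in>{0..1}. f (p t) = x * cis (g t))"
        by blast
      have "negative_arc f a b C" by (rule negI[OF CC(1-4)]) (use CC xy in auto)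
      then show ?thesis using pp CC(7) gg by blast
    qed
  qed
qed


end
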